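(* Let $U=u_1\cdots u_n$ be a finite word and $\lambda\in\Lambda(U)$. Then for every letter $a\ne u_{n-\lambda+1}$, the word $u_{n-\lambda+2}^{n}\,a$ (of length $\lambda$) is not a factor of $U$.
   Context: $u_i^j=u_i\cdots u_j$ (empty if $j<i$), and $\Lambda(U)=\{1\le k<n:\ u_i=u_{i+k}\text{ for all }1\le i\le n-k\}$. *)

theory Defs
  imports Main
begin

text \<open>Words are lists; the paper's 1-indexed letter u_i is U ! (i - 1).\<close>

definition letter :: "'a list \<Rightarrow> nat \<Rightarrow> 'a" where
  "letter U i = U ! (i - 1)"

definition periods :: "'a list \<Rightarrow> nat set" where
  "periods U = {k. 1 \<le> k \<and> k < length U \<and>
     (\<forall>i. 1 \<le> i \<and> i \<le> length U - k \<longrightarrow> letter U i = letter U (i + k))}"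

text \<open>The factor u_i^j = u_i ... u_j (empty if j < i), for 1 <= i, j <= n.\<close>
definition subword :: "'a list \<Rightarrow> nat \<Rightarrow> nat \<Rightarrow> 'a list" where
  "subword U i j = take (Suc j - i) (drop (i - 1) U)"

definition is_factor :: "'a list \<Rightarrow> 'a list \<Rightarrow> bool" where
  "is_factor w U \<longleftrightarrow> (\<exists>p s. U = p @ w @ s)"

end

theory Submission
  imports Defs "HOL-Library.Multiset"
begin

lemma win_step:
  fixes U :: "'a list"
  assumes per: "\<And>j. j + lam < length U \<Longrightarrow> U!j = U!(j+lam)"
    and l: "lam \<ge> 1" and i: "i + lam < length U"
  shows "mset (take lam (drop (Suc i) U)) = mset (take lam (drop i U))"
proof -
  obtain m where m: "lam = Suc m" using l by (cases lam) auto
  have 1: "take lam (drop i U) = U!i # take m (drop (Suc i) U)"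
    using i m by (simp add: Cons_nth_drop_Suc[symmetric])
  have 2: "take lam (drop (Suc i) U) = take m (drop (Suc i) U) @ [U!(i+lam)]"
    using i m by (simp add: take_Suc_conv_app_nth)
  show ?thesis using 1 2 per[OF i] by simp
qed

lemma win_all:
  fixes U :: "'a list"
  assumes per: "\<And>j. j + lam < length U \<Longrightarrow> U!j = U!(j+lam)"
    and l: "lam \<ge> 1"
  shows "i + lam \<le> length U \<Longrightarrow> mset (take lam (drop i U)) = mset (take lam U)"
proof (induction i)
  case 0 then show ?case by simp
next
  case (Suc i)
  then show ?case using win_step[OF per l, of i] by simp
qed

theorem lemma5p3:
  fixes U :: "'a list" and lam :: nat and a :: 'a
  assumes "lam \<in> periods U"
    and "a \<noteq> letter U (length U - lam + 1)"
  shows "\<not> is_factor (subword U (length U - lam + 2) (length U) @ [a]) U"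
proof
  define n where "n = length U"
  have l: "lam \<ge> 1" and ln: "lam < n" and P: "\<And>i. 1 \<le> i \<and> i \<le> n - lam \<Longrightarrow> U!(i-1) = U!(i-1+lam)"
    using assms(1) unfolding periods_def letter_def n_def by auto
  have per: "\<And>j. j + lam < length U \<Longrightarrow> U!j = U!(j+lam)"
  proof -
    fix j assume "j + lam < length U"
    then show "U!j = U!(j+lam)" using P[of "Suc j"] n_def by auto
  qed
  define x where "x = drop (n - lam + 1) U"
  have sw: "subword U (length U - lam + 2) (length U) = x"
    unfolding subword_def x_def n_def using l ln unfolding n_def
    by (simp add: Suc_diff_le)
  assume "is_factor (subword U (length U - lam + 2) (length U) @ [a]) U"
  then obtain p s where U: "U = p @ (x @ [a]) @ s" unfolding is_factor_def sw by auto
  have lx: "length x = lam - 1" using x_def ln l n_def by simp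
  have w1: "take lam (drop (length p) U) = x @ [a]" using U lx l by simp
  have len1: "length p + lam \<le> length U" using U lx l by simp
  have w2: "take lam (drop (n - lam) U) = U!(n-lam) # x"
  proof -
    have "drop (n - lam) U = U!(n-lam) # drop (Suc (n - lam)) U"
      using ln n_def l by (intro Cons_nth_drop_Suc[symmetric]) simp
    moreover have "Suc (n - lam) = n - lam + 1" by simp
    ultimately show ?thesis using x_def ln n_def l
      by (simp add: Suc_diff_le)
  qed
  have "mset (x @ [a]) = mset (U!(n-lam) # x)"
    using win_all[OF per l len1] win_all[OF per l, of "n - lam"] w1 w2 ln n_def by simp
  then have "a = U!(n-lam)" by (simp add: add_mset_eq_single)
  then show False using assms(2) unfolding letter_def n_def by simp
qed

end
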